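(* Let $f$ be a real-valued function on $[0,1]^2$ which is $1$-periodic in each variable, belongs to $C^2([0,1]^2)$, and is not identically zero. For an integer $N\ge 2$, define $g:\mathbb{Z}_N^2\to\mathbb{R}$ by $g(x_1,x_2)=f(x_1/N,x_2/N)$. Assume that $$N\|f\|_{L^2([0,1]^2)}^2\ge 8\|f\|_{C^2([0,1]^2)}^2.$$ Define $\widehat g(m)=\frac{1}{N}\sum_{x\in\mathbb{Z}_N^2}\chi(-x\cdot m)g(x)$ for $m\in\mathbb{Z}_N^2$, where $\chi(t)=e^{2\pi i t/N}$, and $FR(g)=\|\widehat g\|_1/\|\widehat g\|_2$. Then $$FR(g)\le 2\frac{\left|\int_{[0,1]^2} f(x)\,dx\right|}{\|f\|_{L^2([0,1]^2)}}+16\pi^2\frac{\|f\|_{C^2([0,1]^2)}}{\|f\|_{L^2([0,1]^2)}}\log N+\frac{8\pi^2}{\|f\|_{L^2([0,1]^2)}}\frac{\|f\|_{C^2([0,1]^2)}}{N}.$$ In particular, if $f\ge 0$ and $\mu=\int_{[0,1]^2}f(x)\,dx>0$, then $$FR(g)\le 2+16\pi^2\frac{\|f\|_{C^2([0,1]^2)}}{\mu}\log N+\frac{8\pi^2}{\mu}\frac{\|f\|_{C^2([0,1]^2)}}{N}.$$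
   Context: $\|f\|_{C^2([0,1]^2)}$ denotes the standard $C^2$ norm (supremum over $[0,1]^2$ of $|\partial^\alpha f|$ over all multi-indices $|\alpha|\le 2$); $\log$ is the natural logarithm; the $\ell^1$ and $\ell^2$ norms of $\widehat g$ are over $m\in\mathbb{Z}_N^2$. *)

theory Defs
  imports "HOL-Analysis.Analysis"
begin

definition pd1 :: "(real \<times> real \<Rightarrow> real) \<Rightarrow> real \<times> real \<Rightarrow> real" where
  "pd1 f p = deriv (\<lambda>t. f (t, snd p)) (fst p)"

definition pd2 :: "(real \<times> real \<Rightarrow> real) \<Rightarrow> real \<times> real \<Rightarrow> real" where
  "pd2 f p = deriv (\<lambda>t. f (fst p, t)) (snd p)"

definition has_partials :: "(real \<times> real \<Rightarrow> real) \<Rightarrow> bool" where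
  "has_partials f \<longleftrightarrow>
     (\<forall>p. (\<lambda>t. f (t, snd p)) differentiable (at (fst p))) \<and>
     (\<forall>p. (\<lambda>t. f (fst p, t)) differentiable (at (snd p)))"

definition C2 :: "(real \<times> real \<Rightarrow> real) \<Rightarrow> bool" where
  "C2 f \<longleftrightarrow> continuous_on UNIV f \<and>
     has_partials f \<and> has_partials (pd1 f) \<and> has_partials (pd2 f) \<and>
     continuous_on UNIV (pd1 f) \<and> continuous_on UNIV (pd2 f) \<and>
     continuous_on UNIV (pd1 (pd1 f)) \<and> continuous_on UNIV (pd2 (pd1 f)) \<and>
     continuous_on UNIV (pd1 (pd2 f)) \<and> continuous_on UNIV (pd2 (pd2 f))"

definition unit_square :: "(real \<times> real) set" where
  "unit_square = {0..1} \<times> {0..1}"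

definition C2_norm :: "(real \<times> real \<Rightarrow> real) \<Rightarrow> real" where
  "C2_norm f = (SUP p\<in>unit_square. Max {\<bar>f p\<bar>, \<bar>pd1 f p\<bar>, \<bar>pd2 f p\<bar>,
      \<bar>pd1 (pd1 f) p\<bar>, \<bar>pd2 (pd1 f) p\<bar>, \<bar>pd1 (pd2 f) p\<bar>, \<bar>pd2 (pd2 f) p\<bar>})"

definition L2_norm_sq :: "(real \<times> real \<Rightarrow> real) \<Rightarrow> real" where
  "L2_norm_sq f = integral unit_square (\<lambda>p. (f p)\<^sup>2)"

definition L2_norm :: "(real \<times> real \<Rightarrow> real) \<Rightarrow> real" where
  "L2_norm f = sqrt (L2_norm_sq f)"

definition ZN2 :: "nat \<Rightarrow> (nat \<times> nat) set" where
  "ZN2 N = {0..<N} \<times> {0..<N}"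

definition chi :: "nat \<Rightarrow> real \<Rightarrow> complex" where
  "chi N t = exp (2 * pi * \<i> * complex_of_real t / of_nat N)"

definition fourier :: "nat \<Rightarrow> (nat \<times> nat \<Rightarrow> real) \<Rightarrow> nat \<times> nat \<Rightarrow> complex" where
  "fourier N g m = (1 / of_nat N) *
     (\<Sum>x\<in>ZN2 N. chi N (- real (fst x * fst m + snd x * snd m)) * complex_of_real (g x))"

definition FR :: "nat \<Rightarrow> (nat \<times> nat \<Rightarrow> real) \<Rightarrow> real" where
  "FR N g = (\<Sum>m\<in>ZN2 N. cmod (fourier N g m)) / sqrt (\<Sum>m\<in>ZN2 N. (cmod (fourier N g m))\<^sup>2)"

end

theory Submission
  imports Defs
begin


definition per2 :: "(real \<times> real \<Rightarrow> real) \<Rightarrow> bool" where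
  "per2 F \<longleftrightarrow> (\<forall>x y. F (x+1, y) = F (x,y)) \<and> (\<forall>x y. F (x, y+1) = F (x,y))"

lemma deriv_periodic:
  fixes \<phi> :: "real \<Rightarrow> real"
  assumes "\<And>x. \<phi> (x+1) = \<phi> x"
  shows "deriv \<phi> (x+1) = deriv \<phi> x"
proof -
  have e: "(\<lambda>t. \<phi> (t+1)) = \<phi>" using assms by auto
  have "(\<phi> has_field_derivative D) (at (x+1)) \<longleftrightarrow> (\<phi> has_field_derivative D) (at x)" for D
    using DERIV_shift[of \<phi> D x 1] e by simp
  then show ?thesis unfolding deriv_def by simp
qed

lemma per2_pd1: "per2 F \<Longrightarrow> per2 (pd1 F)"
  unfolding per2_def pd1_def
  by (auto intro!: deriv_periodic)

lemma per2_pd2: "per2 F \<Longrightarrow> per2 (pd2 F)"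
  unfolding per2_def pd2_def
  by (auto intro!: deriv_periodic)

lemma per_int:
  fixes \<phi> :: "real \<Rightarrow> 'b"
  assumes "\<And>x. \<phi> (x+1) = \<phi> x"
  shows "\<phi> (x + of_int k) = \<phi> x"
proof (induction k rule: int_induct[where k=0])
  case base then show ?case by simp
next
  case (step1 i) then show ?case using assms[of "x + of_int i"] by (simp add: add.assoc)
next
  case (step2 i) then show ?case using assms[of "x + of_int (i - 1)"] by (simp add: algebra_simps)
qed

lemma per2_frac: assumes "per2 F" shows "F (x,y) = F (frac x, frac y)"
proof -
  have "F (x,y) = F (frac x + of_int \<lfloor>x\<rfloor>, y)" by (simp add: frac_def)
  also have "\<dots> = F (frac x, y)"
    using per_int[of "\<lambda>t. F (t,y)"] assms unfolding per2_def by simp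
  also have "\<dots> = F (frac x, frac y + of_int \<lfloor>y\<rfloor>)" by (simp add: frac_def)
  also have "\<dots> = F (frac x, frac y)"
    using per_int[of "\<lambda>t. F (frac x,t)"] assms unfolding per2_def by simp
  finally show ?thesis .
qed

lemma per2_bound: assumes "per2 F" "\<And>p. p \<in> unit_square \<Longrightarrow> \<bar>F p\<bar> \<le> B"
  shows "\<bar>F p\<bar> \<le> B"
proof -
  obtain x y where p: "p = (x,y)" by force
  have "(frac x, frac y) \<in> unit_square" unfolding unit_square_def
    by (simp add: frac_ge_0 less_imp_le[OF frac_lt_1])
  then show ?thesis using assms per2_frac[OF assms(1)] p by metis
qed



lemma C2_bdd:
  assumes "C2 f"
  shows "bdd_above ((\<lambda>p. Max {\<bar>f p\<bar>, \<bar>pd1 f p\<bar>, \<bar>pd2 f p\<bar>,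
      \<bar>pd1 (pd1 f) p\<bar>, \<bar>pd2 (pd1 f) p\<bar>, \<bar>pd1 (pd2 f) p\<bar>, \<bar>pd2 (pd2 f) p\<bar>}) ` unit_square)"
proof -
  let ?h = "\<lambda>p. \<bar>f p\<bar> + \<bar>pd1 f p\<bar> + \<bar>pd2 f p\<bar> +
      \<bar>pd1 (pd1 f) p\<bar> + \<bar>pd2 (pd1 f) p\<bar> + \<bar>pd1 (pd2 f) p\<bar> + \<bar>pd2 (pd2 f) p\<bar>"
  have "continuous_on UNIV ?h" using assms unfolding C2_def
    by (intro continuous_intros) auto
  moreover have "compact unit_square" unfolding unit_square_def
    by (intro compact_Times compact_Icc)
  ultimately have "compact (?h ` unit_square)"
    by (meson compact_continuous_image continuous_on_subset subset_UNIV)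
  then have "bdd_above (?h ` unit_square)"
    by (simp add: bounded_imp_bdd_above compact_imp_bounded)
  then obtain B where B: "\<And>p. p \<in> unit_square \<Longrightarrow> ?h p \<le> B"
    unfolding bdd_above_def by auto
  show ?thesis unfolding bdd_above_def
  proof (rule exI[of _ B], rule ballI)
    fix z assume "z \<in> (\<lambda>p. Max {\<bar>f p\<bar>, \<bar>pd1 f p\<bar>, \<bar>pd2 f p\<bar>,
      \<bar>pd1 (pd1 f) p\<bar>, \<bar>pd2 (pd1 f) p\<bar>, \<bar>pd1 (pd2 f) p\<bar>, \<bar>pd2 (pd2 f) p\<bar>}) ` unit_square"
    then obtain p where p: "p \<in> unit_square" and z: "z = Max {\<bar>f p\<bar>, \<bar>pd1 f p\<bar>, \<bar>pd2 f p\<bar>,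
      \<bar>pd1 (pd1 f) p\<bar>, \<bar>pd2 (pd1 f) p\<bar>, \<bar>pd1 (pd2 f) p\<bar>, \<bar>pd2 (pd2 f) p\<bar>}" by blast
    have "z \<le> ?h p" unfolding z
      by (rule Max.boundedI) auto
    then show "z \<le> B" using B[OF p] by linarith
  qed
qed

lemma C2_le:
  assumes "C2 f" "p \<in> unit_square"
  shows "\<bar>f p\<bar> \<le> C2_norm f" "\<bar>pd1 f p\<bar> \<le> C2_norm f" "\<bar>pd2 f p\<bar> \<le> C2_norm f"
    "\<bar>pd1 (pd1 f) p\<bar> \<le> C2_norm f" "\<bar>pd2 (pd2 f) p\<bar> \<le> C2_norm f"
proof -
  let ?M = "\<lambda>p. Max {\<bar>f p\<bar>, \<bar>pd1 f p\<bar>, \<bar>pd2 f p\<bar>,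
      \<bar>pd1 (pd1 f) p\<bar>, \<bar>pd2 (pd1 f) p\<bar>, \<bar>pd1 (pd2 f) p\<bar>, \<bar>pd2 (pd2 f) p\<bar>}"
  have "?M p \<le> C2_norm f" unfolding C2_norm_def
    by (rule cSUP_upper[OF assms(2) C2_bdd[OF assms(1)]])
  then show "\<bar>f p\<bar> \<le> C2_norm f" "\<bar>pd1 f p\<bar> \<le> C2_norm f" "\<bar>pd2 f p\<bar> \<le> C2_norm f"
    "\<bar>pd1 (pd1 f) p\<bar> \<le> C2_norm f" "\<bar>pd2 (pd2 f) p\<bar> \<le> C2_norm f"
    by (auto simp add: le_max_iff_disj simp del: Max_insert)
qed

lemma C2_le_all:
  assumes "C2 f" "per2 f"
  shows "\<bar>f p\<bar> \<le> C2_norm f" "\<bar>pd1 f p\<bar> \<le> C2_norm f" "\<bar>pd2 f p\<bar> \<le> C2_norm f"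
    "\<bar>pd1 (pd1 f) p\<bar> \<le> C2_norm f" "\<bar>pd2 (pd2 f) p\<bar> \<le> C2_norm f"
proof -
  have p1: "per2 (pd1 f)" "per2 (pd2 f)" "per2 (pd1 (pd1 f))" "per2 (pd2 (pd2 f))"
    using assms(2) per2_pd1 per2_pd2 by blast+
  show "\<bar>f p\<bar> \<le> C2_norm f" by (rule per2_bound[OF assms(2)]) (rule C2_le[OF assms(1)])
  show "\<bar>pd1 f p\<bar> \<le> C2_norm f" by (rule per2_bound[OF p1(1)]) (rule C2_le[OF assms(1)])
  show "\<bar>pd2 f p\<bar> \<le> C2_norm f" by (rule per2_bound[OF p1(2)]) (rule C2_le[OF assms(1)])
  show "\<bar>pd1 (pd1 f) p\<bar> \<le> C2_norm f" by (rule per2_bound[OF p1(3)]) (rule C2_le[OF assms(1)])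
  show "\<bar>pd2 (pd2 f) p\<bar> \<le> C2_norm f" by (rule per2_bound[OF p1(4)]) (rule C2_le[OF assms(1)])
qed

lemma C2_deriv1:
  assumes "C2 f"
  shows "((\<lambda>t. f (t, y)) has_real_derivative pd1 f (t, y)) (at t)"
    "((\<lambda>t. pd1 f (t, y)) has_real_derivative pd1 (pd1 f) (t, y)) (at t)"
    "((\<lambda>t. f (x, t)) has_real_derivative pd2 f (x, t)) (at t)"
    "((\<lambda>t. pd2 f (x, t)) has_real_derivative pd2 (pd2 f) (x, t)) (at t)"
proof -
  have h: "has_partials f" "has_partials (pd1 f)" "has_partials (pd2 f)" using assms unfolding C2_def by auto
  show "((\<lambda>t. f (t, y)) has_real_derivative pd1 f (t, y)) (at t)"
    using h(1) unfolding has_partials_def pd1_def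
    using DERIV_deriv_iff_real_differentiable[of "\<lambda>t. f (t, y)" t] by auto
  show "((\<lambda>t. pd1 f (t, y)) has_real_derivative pd1 (pd1 f) (t, y)) (at t)"
    using h(2) unfolding has_partials_def pd1_def[of "pd1 f"]
    using DERIV_deriv_iff_real_differentiable[of "\<lambda>t. pd1 f (t, y)" t] by auto
  show "((\<lambda>t. f (x, t)) has_real_derivative pd2 f (x, t)) (at t)"
    using h(1) unfolding has_partials_def pd2_def
    using DERIV_deriv_iff_real_differentiable[of "\<lambda>t. f (x, t)" t] by auto
  show "((\<lambda>t. pd2 f (x, t)) has_real_derivative pd2 (pd2 f) (x, t)) (at t)"
    using h(3) unfolding has_partials_def pd2_def[of "pd2 f"]
    using DERIV_deriv_iff_real_differentiable[of "\<lambda>t. pd2 f (x, t)" t] by auto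
qed



lemma mvt_bound:
  fixes \<phi> \<phi>' :: "real \<Rightarrow> real"
  assumes d: "\<And>t. (\<phi> has_real_derivative \<phi>' t) (at t)" and B: "\<And>t. \<bar>\<phi>' t\<bar> \<le> B"
  shows "\<bar>\<phi> b - \<phi> a\<bar> \<le> B * \<bar>b - a\<bar>"
proof -
  have *: "\<bar>\<phi> v - \<phi> u\<bar> \<le> B * \<bar>v - u\<bar>" if uv: "u < v" for u v
  proof -
    obtain z where "\<phi> v - \<phi> u = (v - u) * \<phi>' z" using MVT2[OF uv, of \<phi> \<phi>'] d by blast
    then have "\<bar>\<phi> v - \<phi> u\<bar> = \<bar>v - u\<bar> * \<bar>\<phi>' z\<bar>" by (simp add: abs_mult)
    also have "\<dots> \<le> \<bar>v - u\<bar> * B" by (rule mult_left_mono[OF B]) simp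
    finally show ?thesis by (simp add: mult.commute)
  qed
  consider "a < b" | "a = b" | "b < a" by linarith
  then show ?thesis
  proof cases
    case 3 then show ?thesis using *[OF 3] by (simp add: abs_minus_commute)
  qed (use * in auto)
qed

lemma second_diff:
  fixes \<phi> \<phi>' \<phi>'' :: "real \<Rightarrow> real"
  assumes d: "\<And>t. (\<phi> has_real_derivative \<phi>' t) (at t)"
    and d2: "\<And>t. (\<phi>' has_real_derivative \<phi>'' t) (at t)"
    and B: "\<And>t. \<bar>\<phi>'' t\<bar> \<le> B" and h: "0 \<le> h"
  shows "\<bar>\<phi> (x + h) - 2 * \<phi> x + \<phi> (x - h)\<bar> \<le> 2 * h^2 * B"
proof (cases "h = 0")
  case True then show ?thesis by simp
next
  case False
  then have hp: "0 < h" using h by simp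
  obtain z1 where z1: "x < z1" "z1 < x + h" "\<phi> (x + h) - \<phi> x = (x + h - x) * \<phi>' z1"
    using MVT2[of x "x+h" \<phi> \<phi>'] d hp by auto
  obtain z2 where z2: "x - h < z2" "z2 < x" "\<phi> x - \<phi> (x - h) = (x - (x - h)) * \<phi>' z2"
    using MVT2[of "x - h" x \<phi> \<phi>'] d hp by auto
  have "\<bar>\<phi>' z1 - \<phi>' z2\<bar> \<le> B * \<bar>z1 - z2\<bar>" by (rule mvt_bound[OF d2 B])
  also have "\<dots> \<le> B * (2 * h)"
    using z1 z2 B[of 0] by (intro mult_left_mono) auto
  finally have e: "\<bar>\<phi>' z1 - \<phi>' z2\<bar> \<le> B * (2 * h)" .
  have "\<phi> (x + h) - 2 * \<phi> x + \<phi> (x - h) = h * (\<phi>' z1 - \<phi>' z2)"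
    using z1(3) z2(3) by (simp add: algebra_simps)
  then have "\<bar>\<phi> (x + h) - 2 * \<phi> x + \<phi> (x - h)\<bar> = h * \<bar>\<phi>' z1 - \<phi>' z2\<bar>"
    using hp by (simp add: abs_mult)
  also have "\<dots> \<le> h * (B * (2 * h))" using e hp by (intro mult_left_mono) auto
  finally show ?thesis by (simp add: power2_eq_square algebra_simps)
qed

lemma f_sd1:
  assumes "C2 f" "per2 f" "0 \<le> h"
  shows "\<bar>f (x + h, y) - 2 * f (x, y) + f (x - h, y)\<bar> \<le> 2 * h^2 * C2_norm f"
  using second_diff[of "\<lambda>t. f (t, y)" "\<lambda>t. pd1 f (t, y)" "\<lambda>t. pd1 (pd1 f) (t, y)" "C2_norm f" h x]
    C2_deriv1[OF assms(1)] C2_le_all[OF assms(1,2)] assms(3) by blast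

lemma f_sd2:
  assumes "C2 f" "per2 f" "0 \<le> h"
  shows "\<bar>f (x, y + h) - 2 * f (x, y) + f (x, y - h)\<bar> \<le> 2 * h^2 * C2_norm f"
  using second_diff[of "\<lambda>t. f (x, t)" "\<lambda>t. pd2 f (x, t)" "\<lambda>t. pd2 (pd2 f) (x, t)" "C2_norm f" h y]
    C2_deriv1[OF assms(1)] C2_le_all[OF assms(1,2)] assms(3) by blast

lemma f_lip:
  assumes "C2 f" "per2 f"
  shows "\<bar>f (a, b) - f (c, d)\<bar> \<le> C2_norm f * (\<bar>a - c\<bar> + \<bar>b - d\<bar>)"
proof -
  have 1: "\<bar>f (a, b) - f (c, b)\<bar> \<le> C2_norm f * \<bar>a - c\<bar>"
    using mvt_bound[of "\<lambda>t. f (t, b)" "\<lambda>t. pd1 f (t, b)" "C2_norm f" a c]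
      C2_deriv1[OF assms(1)] C2_le_all[OF assms(1,2)] by blast
  have 2: "\<bar>f (c, b) - f (c, d)\<bar> \<le> C2_norm f * \<bar>b - d\<bar>"
    using mvt_bound[of "\<lambda>t. f (c, t)" "\<lambda>t. pd2 f (c, t)" "C2_norm f" b d]
      C2_deriv1[OF assms(1)] C2_le_all[OF assms(1,2)] by blast
  show ?thesis using 1 2 abs_triangle_ineq[of "f (a, b) - f (c, b)" "f (c, b) - f (c, d)"]
    by (simp add: algebra_simps)
qed



definition cell :: "nat \<Rightarrow> nat \<times> nat \<Rightarrow> (real \<times> real) set" where
  "cell N x = {real (fst x) / N .. (real (fst x) + 1) / N} \<times> {real (snd x) / N .. (real (snd x) + 1) / N}"

lemma cell_cbox: "cell N x = cbox (real (fst x) / N, real (snd x) / N) ((real (fst x) + 1) / N, (real (snd x) + 1) / N)"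
  unfolding cell_def by (simp add: cbox_Pair_eq)

lemma idx_ex:
  assumes "0 \<le> a" "a \<le> 1" "0 < N"
  shows "\<exists>i<N. real i / N \<le> a \<and> a \<le> (real i + 1) / N"
proof (cases "a = 1")
  case True
  then show ?thesis using assms by (intro exI[of _ "N - 1"]) (auto simp: divide_simps of_nat_diff)
next
  case False
  then have a1: "a < 1" using assms by simp
  define i where "i = nat \<lfloor>real N * a\<rfloor>"
  have fl0: "0 \<le> \<lfloor>real N * a\<rfloor>" using assms by simp
  have ri: "real i = of_int \<lfloor>real N * a\<rfloor>" unfolding i_def using fl0 by simp
  have "real N * a < real N" using a1 assms by simp
  moreover have "of_int \<lfloor>real N * a\<rfloor> \<le> real N * a" by (rule of_int_floor_le)
  ultimately have "of_int \<lfloor>real N * a\<rfloor> < real N" by linarith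
  then have "i < N" using ri by linarith
  moreover have "real i \<le> real N * a" using ri by simp
  moreover have "real N * a < real i + 1" using ri by linarith
  ultimately show ?thesis using assms
    by (intro exI[of _ i]) (auto simp: divide_simps mult.commute)
qed

lemma in_unit_interval:
  fixes i N :: nat and t :: real
  assumes "real i / N \<le> t" "t \<le> (real i + 1) / N" "i < N"
  shows "0 \<le> t" "t \<le> 1"
proof -
  have "0 \<le> real i / N" by simp
  then show "0 \<le> t" using assms(1) by linarith
  have "real i + 1 \<le> real N" using assms(3) by simp
  then have "(real i + 1) / N \<le> 1" using assms(3) by (simp add: divide_le_eq_1)
  then show "t \<le> 1" using assms(2) by linarith
qed

lemma cell_sub: "x \<in> ZN2 N \<Longrightarrow> cell N x \<subseteq> unit_square"
  unfolding cell_def unit_square_def ZN2_def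
  using in_unit_interval[of "fst x" N] in_unit_interval[of "snd x" N] by (auto simp: mem_Times_iff)

lemma cell_division:
  assumes "0 < N"
  shows "(cell N ` ZN2 N) division_of unit_square"
proof (rule division_ofI)
  show "finite (cell N ` ZN2 N)" unfolding ZN2_def by simp
next
  fix K assume "K \<in> cell N ` ZN2 N"
  then obtain x where x: "x \<in> ZN2 N" "K = cell N x" by blast
  show "K \<subseteq> unit_square" using x cell_sub by blast
  show "K \<noteq> {}" using x assms unfolding cell_def by (auto simp: divide_simps)
  show "\<exists>a b. K = cbox a b" using x cell_cbox by blast
next
  fix K1 K2 assume K12: "K1 \<in> cell N ` ZN2 N" "K2 \<in> cell N ` ZN2 N" "K1 \<noteq> K2"
  obtain x where x: "K1 = cell N x" using K12(1) by (auto simp: image_iff)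
  obtain y where y: "K2 = cell N y" using K12(2) by (auto simp: image_iff)
  have xy: "K1 = cell N x" "K2 = cell N y" "x \<noteq> y" using x y K12(3) by auto
  have eq: "i = j" if "real i / N < t" "t < (real i + 1) / N" "real j / N < t" "t < (real j + 1) / N"
    for i j :: nat and t :: real
  proof -
    have "real i < N * t" "N * t < real i + 1" "real j < N * t" "N * t < real j + 1"
      using that assms by (auto simp: divide_simps mult.commute)
    then have "real i < real j + 1" "real j < real i + 1" by linarith+
    then show ?thesis by linarith
  qed
  show "interior K1 \<inter> interior K2 = {}"
  proof (rule ccontr)
    assume "interior K1 \<inter> interior K2 \<noteq> {}"
    then obtain a b where ab: "(a,b) \<in> interior K1" "(a,b) \<in> interior K2" by auto
    then have "fst x = fst y" "snd x = snd y"
      unfolding xy cell_def interior_Times interior_atLeastAtMost_real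
      using eq by auto
    then show False using xy(3) by (simp add: prod_eq_iff)
  qed
next
  show "\<Union> (cell N ` ZN2 N) = unit_square"
  proof
    show "\<Union> (cell N ` ZN2 N) \<subseteq> unit_square"
    proof
      fix p assume "p \<in> \<Union> (cell N ` ZN2 N)"
      then obtain x where x: "x \<in> ZN2 N" "p \<in> cell N x" by blast
      show "p \<in> unit_square" using x cell_sub by blast
    qed
  next
    show "unit_square \<subseteq> \<Union> (cell N ` ZN2 N)"
    proof
      fix p assume "p \<in> unit_square"
      then obtain a b where p: "p = (a,b)" "0 \<le> a" "a \<le> 1" "0 \<le> b" "b \<le> 1"
        unfolding unit_square_def by auto
      obtain i where i: "i < N" "real i / N \<le> a" "a \<le> (real i + 1) / N" using idx_ex[OF p(2,3) assms] by blast
      obtain j where j: "j < N" "real j / N \<le> b" "b \<le> (real j + 1) / N" using idx_ex[OF p(4,5) assms] by blast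
      have "(i,j) \<in> ZN2 N" "p \<in> cell N (i,j)" using i j p unfolding ZN2_def cell_def by auto
      then show "p \<in> \<Union> (cell N ` ZN2 N)" by blast
    qed
  qed
qed



lemma card_ZN2: "card (ZN2 N) = N * N"
  unfolding ZN2_def by (simp add: card_cartesian_product)

lemma content_cell: "0 < N \<Longrightarrow> Henstock_Kurzweil_Integration.content (cell N x) = 1 / (real N)^2"
  unfolding cell_cbox content_Pair by (simp add: content_real divide_simps power2_eq_square)

lemma inj_cell: "0 < N \<Longrightarrow> inj_on (cell N) A"
proof (rule inj_onI)
  fix x y assume N: "0 < N" and e: "cell N x = cell N y"
  have "(real (fst x) / N, real (snd x) / N) \<in> cell N x" "(real (fst y) / N, real (snd y) / N) \<in> cell N y"
    using N unfolding cell_def by (auto simp: divide_simps)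
  then have m: "(real (fst x) / N, real (snd x) / N) \<in> cell N y" "(real (fst y) / N, real (snd y) / N) \<in> cell N x"
    using e by auto
  have "real (fst y) / N \<le> real (fst x) / N" "real (fst x) / N \<le> real (fst y) / N"
      "real (snd y) / N \<le> real (snd x) / N" "real (snd x) / N \<le> real (snd y) / N"
    using m unfolding cell_def by auto
  then have "real (fst y) \<le> real (fst x)" "real (fst x) \<le> real (fst y)"
      "real (snd y) \<le> real (snd x)" "real (snd x) \<le> real (snd y)"
    using N by (simp_all add: divide_right_mono_neg divide_le_cancel)
  then have "fst x = fst y" "snd x = snd y" by linarith+
  then show "x = y" by (simp add: prod_eq_iff)
qed

lemma riemann:
  fixes F :: "real \<times> real \<Rightarrow> real" and N :: nat and L :: real
  assumes N: "0 < N" and cont: "continuous_on UNIV F"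
    and lip: "\<And>a b c d. \<bar>F (a,b) - F (c,d)\<bar> \<le> L * (\<bar>a - c\<bar> + \<bar>b - d\<bar>)"
  shows "\<bar>(\<Sum>x\<in>ZN2 N. F (real (fst x) / N, real (snd x) / N)) - (real N)^2 * integral unit_square F\<bar> \<le> 2 * L * N"
proof -
  have L0: "0 \<le> L" using lip[of 1 0 0 0] by simp
  have int: "(F has_integral integral (cell N x) F) (cell N x)" for x
    unfolding cell_cbox
    by (rule integrable_integral, rule integrable_continuous, rule continuous_on_subset[OF cont]) auto
  have "(F has_integral (\<Sum>K\<in>cell N ` ZN2 N. integral K F)) unit_square"
    by (rule has_integral_combine_division[OF cell_division[OF N]]) (use int in auto)
  then have I: "integral unit_square F = (\<Sum>x\<in>ZN2 N. integral (cell N x) F)"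
    using sum.reindex[OF inj_cell[OF N], of "\<lambda>K. integral K F" "ZN2 N"]
    by (simp add: integral_unique)
  have cellb: "\<bar>F (real (fst x) / N, real (snd x) / N) - (real N)^2 * integral (cell N x) F\<bar> \<le> 2 * L / N" for x
  proof -
    define c where "c = F (real (fst x) / N, real (snd x) / N)"
    have hi: "((\<lambda>p. F p - c) has_integral (integral (cell N x) F - Henstock_Kurzweil_Integration.content (cell N x) *\<^sub>R c)) (cell N x)"
      using has_integral_diff[OF int[unfolded cell_cbox] has_integral_const] unfolding cell_cbox by simp
    have pb: "norm (F p - c) \<le> 2 * L / N" if p: "p \<in> cell N x" for p
    proof -
      obtain a b where ab: "p = (a,b)" by force
      have "\<bar>a - real (fst x) / N\<bar> \<le> 1 / N" "\<bar>b - real (snd x) / N\<bar> \<le> 1 / N"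
        using p N unfolding ab cell_def by (auto simp: divide_simps)
      then have "L * (\<bar>a - real (fst x) / N\<bar> + \<bar>b - real (snd x) / N\<bar>) \<le> L * (2 / N)"
        using L0 by (intro mult_left_mono) auto
      then show ?thesis using lip[of a b "real (fst x) / N" "real (snd x) / N"] unfolding ab c_def
        by (simp add: mult.commute)
    qed
    have "norm (integral (cell N x) F - Henstock_Kurzweil_Integration.content (cell N x) *\<^sub>R c) \<le> 2 * L / N * Henstock_Kurzweil_Integration.content (cell N x)"
      using has_integral_bound[of "2 * L / N" "\<lambda>p. F p - c"] hi pb L0 unfolding cell_cbox by simp
    then have "\<bar>integral (cell N x) F - c / (real N)^2\<bar> \<le> 2 * L / N / (real N)^2"
      using content_cell[OF N] by (simp add: divide_simps)
    then have "(real N)^2 * \<bar>integral (cell N x) F - c / (real N)^2\<bar> \<le> 2 * L / N"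
      using N by (simp add: divide_simps mult.commute)
    moreover have "(real N)^2 * \<bar>integral (cell N x) F - c / (real N)^2\<bar> = \<bar>c - (real N)^2 * integral (cell N x) F\<bar>"
    proof -
      have "(real N)^2 * (integral (cell N x) F - c / (real N)^2) = (real N)^2 * integral (cell N x) F - c"
        using N by (simp add: field_simps)
      moreover have "(real N)^2 * \<bar>integral (cell N x) F - c / (real N)^2\<bar> = \<bar>(real N)^2 * (integral (cell N x) F - c / (real N)^2)\<bar>"
        by (simp add: abs_mult)
      ultimately show ?thesis by (simp add: abs_minus_commute)
    qed
    ultimately show ?thesis unfolding c_def by simp
  qed
  have "\<bar>(\<Sum>x\<in>ZN2 N. F (real (fst x) / N, real (snd x) / N)) - (real N)^2 * integral unit_square F\<bar>
      = \<bar>\<Sum>x\<in>ZN2 N. (F (real (fst x) / N, real (snd x) / N) - (real N)^2 * integral (cell N x) F)\<bar>"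
    unfolding I by (simp add: sum_subtractf sum_distrib_left)
  also have "\<dots> \<le> (\<Sum>x\<in>ZN2 N. \<bar>F (real (fst x) / N, real (snd x) / N) - (real N)^2 * integral (cell N x) F\<bar>)"
    by (rule sum_abs)
  also have "\<dots> \<le> (\<Sum>x\<in>ZN2 N. 2 * L / N)" by (rule sum_mono) (rule cellb)
  also have "\<dots> = 2 * L * N" using N by (simp add: card_ZN2 divide_simps)
  finally show ?thesis .
qed



lemma chi_add: "chi N (a + b) = chi N a * chi N b"
  unfolding chi_def by (simp add: exp_add[symmetric] distrib_left add_divide_distrib)

lemma chi_zero: "chi N 0 = 1" unfolding chi_def by simp

lemma chi_minus: "chi N (- a) = inverse (chi N a)"
  unfolding chi_def by (simp add: exp_minus[symmetric])

lemma cnj_chi: "cnj (chi N a) = chi N (- a)"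
  unfolding chi_def by (simp add: exp_cnj)

lemma norm_chi: "norm (chi N a) = 1"
proof -
  have "chi N a = exp (\<i> * complex_of_real (2 * pi * a / real N))"
    unfolding chi_def by (simp add: mult_ac)
  then show ?thesis by simp
qed

lemma chi_intN: assumes "0 < N" shows "chi N (real_of_int k * real N) = 1"
proof -
  have "chi N (real_of_int k * real N) = exp ((2 * of_int k * pi) * \<i>)"
    unfolding chi_def using assms by (simp add: field_simps)
  also have "\<dots> = 1" by (rule exp_integer_2pi) simp
  finally show ?thesis .
qed

lemma chi_natN: assumes "0 < N" shows "chi N (real k * real N) = 1"
  using chi_intN[OF assms, of "int k"] by simp

lemma chi_plus_minus: "chi N a + chi N (- a) = of_real (2 * cos (2 * pi * a / N))"
proof -
  have "chi N a + chi N (- a) = chi N a + cnj (chi N a)" by (simp add: cnj_chi)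
  also have "\<dots> = of_real (2 * Re (chi N a))" by (simp add: complex_add_cnj)
  also have "Re (chi N a) = cos (2 * pi * a / N)" unfolding chi_def by (simp add: Re_exp)
  finally show ?thesis .
qed

lemma sum_shift_periodic:
  fixes h :: "nat \<Rightarrow> complex"
  assumes "\<And>j. h (j + N) = h j"
  shows "(\<Sum>j<N. h (j + k)) = (\<Sum>j<N. h j)"
proof (induction k)
  case 0 then show ?case by simp
next
  case (Suc k)
  define h' where "h' j = h (j + k)" for j
  have "(\<Sum>j<Suc N. h' j) = h' 0 + (\<Sum>j<N. h' (Suc j))" by (rule sum.lessThan_Suc_shift)
  moreover have "(\<Sum>j<Suc N. h' j) = (\<Sum>j<N. h' j) + h' N" by simp
  moreover have "h' N = h' 0" unfolding h'_def using assms[of k] by (simp add: add.commute)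
  ultimately have "(\<Sum>j<N. h' (Suc j)) = (\<Sum>j<N. h' j)" by simp
  then show ?case using Suc unfolding h'_def by simp
qed

lemma geom_orth:
  fixes k :: int
  assumes N: "0 < N" and k: "\<bar>k\<bar> < int N"
  shows "(\<Sum>j<N. chi N (real_of_int k * real j)) = (if k = 0 then of_nat N else 0)"
proof (cases "k = 0")
  case True then show ?thesis by (simp add: chi_zero)
next
  case False
  define w where "w = chi N (real_of_int k)"
  have pw: "chi N (real_of_int k * real j) = w ^ j" for j
    unfolding w_def chi_def by (simp add: exp_of_nat_mult[symmetric] mult_ac)
  have w1: "w \<noteq> 1"
  proof
    assume "w = 1"
    then have "exp (complex_of_real (2 * pi * real_of_int k / real N) * \<i>) = 1"
      unfolding w_def chi_def by (simp add: mult_ac)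
    then obtain n :: int where n: "2 * pi * real_of_int k / real N = of_int (2 * n) * pi"
      by (auto simp: exp_eq_1)
    then have "real_of_int k = of_int n * real N" using N by (simp add: field_simps)
    then have kn: "k = n * int N" by (metis of_int_eq_iff of_int_mult of_int_of_nat_eq)
    have "n \<noteq> 0" using False kn by auto
    then have "\<bar>k\<bar> \<ge> int N" unfolding kn abs_mult using N by (simp add: mult_le_cancel_right1 linorder_not_less[symmetric])
    then show False using k by simp
  qed
  have "w ^ N = 1" using chi_intN[OF N, of k] pw[of N] by simp
  then show ?thesis using False geometric_sum[OF w1, of N] by (simp add: pw)
qed



definition ee :: "nat \<Rightarrow> nat \<times> nat \<Rightarrow> nat \<times> nat \<Rightarrow> complex" where
  "ee N x m = chi N (- real (fst x * fst m + snd x * snd m))"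

lemma fourier_ee: "fourier N g m = (1 / of_nat N) * (\<Sum>x\<in>ZN2 N. ee N x m * complex_of_real (g x))"
  unfolding fourier_def ee_def by simp

lemma sum_ZN2: "(\<Sum>m\<in>ZN2 N. h m) = (\<Sum>a<N. \<Sum>b<N. h (a, b))"
  unfolding ZN2_def by (simp add: atLeast0LessThan sum.cartesian_product)

lemma ee_orth:
  assumes N: "0 < N" and x: "x \<in> ZN2 N" and y: "y \<in> ZN2 N"
  shows "(\<Sum>m\<in>ZN2 N. ee N x m * cnj (ee N y m)) = (if x = y then (of_nat N)^2 else 0)"
proof -
  define k1 where "k1 = int (fst y) - int (fst x)"
  define k2 where "k2 = int (snd y) - int (snd x)"
  have k: "\<bar>k1\<bar> < int N" "\<bar>k2\<bar> < int N" using x y unfolding k1_def k2_def ZN2_def by auto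
  have e: "ee N x m * cnj (ee N y m) = chi N (real_of_int k1 * real (fst m)) * chi N (real_of_int k2 * real (snd m))" for m
  proof -
    have "- real (fst x * fst m + snd x * snd m) + real (fst y * fst m + snd y * snd m)
        = real_of_int k1 * real (fst m) + real_of_int k2 * real (snd m)"
      unfolding k1_def k2_def by (simp add: algebra_simps)
    then show ?thesis unfolding ee_def cnj_chi
      by (metis chi_add minus_minus)
  qed
  have "(\<Sum>m\<in>ZN2 N. ee N x m * cnj (ee N y m))
      = (\<Sum>a<N. \<Sum>b<N. chi N (real_of_int k1 * real a) * chi N (real_of_int k2 * real b))"
    unfolding sum_ZN2 e by simp
  also have "\<dots> = (\<Sum>a<N. chi N (real_of_int k1 * real a)) * (\<Sum>b<N. chi N (real_of_int k2 * real b))"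
    by (simp add: sum_product)
  also have "\<dots> = (if k1 = 0 then of_nat N else 0) * (if k2 = 0 then of_nat N else 0)"
    using geom_orth[OF N k(1)] geom_orth[OF N k(2)] by simp
  also have "\<dots> = (if x = y then (of_nat N)^2 else 0)"
    unfolding k1_def k2_def by (auto simp: prod_eq_iff power2_eq_square)
  finally show ?thesis .
qed

lemma parseval:
  assumes N: "0 < N"
  shows "(\<Sum>m\<in>ZN2 N. (cmod (fourier N g m))^2) = (\<Sum>x\<in>ZN2 N. (g x)^2)"
proof -
  let ?Z = "ZN2 N"
  have fin: "finite ?Z" unfolding ZN2_def by simp
  have sq: "complex_of_real ((cmod (fourier N g m))^2)
      = (1 / (of_nat N)^2) * (\<Sum>x\<in>?Z. \<Sum>y\<in>?Z. complex_of_real (g x * g y) * (ee N x m * cnj (ee N y m)))" for m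
  proof -
    have "complex_of_real ((cmod (fourier N g m))^2) = fourier N g m * cnj (fourier N g m)"
      by (rule complex_norm_square)
    also have "\<dots> = (1 / (of_nat N)^2) * ((\<Sum>x\<in>?Z. ee N x m * complex_of_real (g x)) *
        (\<Sum>y\<in>?Z. cnj (ee N y m) * complex_of_real (g y)))"
      unfolding fourier_ee by (simp add: power2_eq_square)
    also have "\<dots> = (1 / (of_nat N)^2) * (\<Sum>x\<in>?Z. \<Sum>y\<in>?Z. complex_of_real (g x * g y) * (ee N x m * cnj (ee N y m)))"
      by (simp add: sum_product mult_ac)
    finally show ?thesis .
  qed
  have "complex_of_real (\<Sum>m\<in>?Z. (cmod (fourier N g m))^2)
      = (\<Sum>m\<in>?Z. (1 / (of_nat N)^2) * (\<Sum>x\<in>?Z. \<Sum>y\<in>?Z. complex_of_real (g x * g y) * (ee N x m * cnj (ee N y m))))"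
    by (simp only: of_real_sum sq)
  also have "\<dots> = (1 / (of_nat N)^2) * (\<Sum>m\<in>?Z. \<Sum>x\<in>?Z. \<Sum>y\<in>?Z. complex_of_real (g x * g y) * (ee N x m * cnj (ee N y m)))"
    by (simp add: sum_distrib_left)
  also have "(\<Sum>m\<in>?Z. \<Sum>x\<in>?Z. \<Sum>y\<in>?Z. complex_of_real (g x * g y) * (ee N x m * cnj (ee N y m)))
      = (\<Sum>x\<in>?Z. \<Sum>m\<in>?Z. \<Sum>y\<in>?Z. complex_of_real (g x * g y) * (ee N x m * cnj (ee N y m)))"
    by (rule sum.swap)
  also have "\<dots> = (\<Sum>x\<in>?Z. \<Sum>y\<in>?Z. \<Sum>m\<in>?Z. complex_of_real (g x * g y) * (ee N x m * cnj (ee N y m)))"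
    by (rule sum.cong[OF refl], rule sum.swap)
  also have "\<dots> = (\<Sum>x\<in>?Z. \<Sum>y\<in>?Z. complex_of_real (g x * g y) * (\<Sum>m\<in>?Z. ee N x m * cnj (ee N y m)))"
    by (simp add: sum_distrib_left)
  also have "\<dots> = (\<Sum>x\<in>?Z. \<Sum>y\<in>?Z. (if y = x then complex_of_real (g x * g y) * (of_nat N)^2 else 0))"
    by (rule sum.cong[OF refl], rule sum.cong[OF refl]) (auto simp: ee_orth[OF N])
  also have "\<dots> = (\<Sum>x\<in>?Z. complex_of_real (g x * g x) * (of_nat N)^2)"
    using fin by simp
  finally have "complex_of_real (\<Sum>m\<in>?Z. (cmod (fourier N g m))^2)
      = (1 / (of_nat N)^2) * (\<Sum>x\<in>?Z. complex_of_real (g x * g x) * (of_nat N)^2)" .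
  also have "\<dots> = complex_of_real (\<Sum>x\<in>?Z. (g x)^2)"
    using N by (simp add: sum_distrib_left sum_distrib_right power2_eq_square)
  finally show ?thesis using of_real_eq_iff by blast
qed



definition SS :: "nat \<Rightarrow> (nat \<times> nat \<Rightarrow> real) \<Rightarrow> nat \<times> nat \<Rightarrow> complex" where
  "SS N g m = (\<Sum>x\<in>ZN2 N. ee N x m * complex_of_real (g x))"

lemma ee_per1: assumes "0 < N" shows "ee N (a + N, b) m = ee N (a, b) m"
proof -
  have "- real ((a + N) * fst m + b * snd m) = - real (a * fst m + b * snd m) + real_of_int (- int (fst m)) * real N"
    by (simp add: algebra_simps)
  note eq = this
  show ?thesis unfolding ee_def fst_conv snd_conv eq chi_add chi_intN[OF assms] by simp
qed

lemma ee_per2: assumes "0 < N" shows "ee N (a, b + N) m = ee N (a, b) m"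
proof -
  have "- real (a * fst m + (b + N) * snd m) = - real (a * fst m + b * snd m) + real_of_int (- int (snd m)) * real N"
    by (simp add: algebra_simps)
  note eq = this
  show ?thesis unfolding ee_def fst_conv snd_conv eq chi_add chi_intN[OF assms] by simp
qed

lemma ee_shift1: "ee N (a, b) m = chi N (real k * real (fst m)) * ee N (a + k, b) m"
proof -
  have "- real (a * fst m + b * snd m) = real k * real (fst m) + - real ((a + k) * fst m + b * snd m)"
    by (simp add: algebra_simps)
  note eq = this
  show ?thesis unfolding ee_def fst_conv snd_conv eq by (rule chi_add)
qed

lemma ee_shift2: "ee N (a, b) m = chi N (real k * real (snd m)) * ee N (a, b + k) m"
proof -
  have "- real (a * fst m + b * snd m) = real k * real (snd m) + - real (a * fst m + (b + k) * snd m)"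
    by (simp add: algebra_simps)
  note eq = this
  show ?thesis unfolding ee_def fst_conv snd_conv eq by (rule chi_add)
qed

lemma shift_sum1:
  assumes N: "0 < N" and gper: "\<And>a b. g (a + N, b) = g (a, b)"
  shows "(\<Sum>x\<in>ZN2 N. ee N x m * complex_of_real (g (fst x + k, snd x))) = chi N (real k * real (fst m)) * SS N g m"
proof -
  define h where "h a = (\<Sum>b<N. ee N (a, b) m * complex_of_real (g (a, b)))" for a
  have hp: "h (a + N) = h a" for a unfolding h_def using ee_per1[OF N] gper by simp
  have "(\<Sum>x\<in>ZN2 N. ee N x m * complex_of_real (g (fst x + k, snd x)))
      = (\<Sum>a<N. \<Sum>b<N. chi N (real k * real (fst m)) * (ee N (a + k, b) m * complex_of_real (g (a + k, b))))"
    unfolding sum_ZN2 by (subst ee_shift1[where k=k]) (simp add: mult_ac)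
  also have "\<dots> = chi N (real k * real (fst m)) * (\<Sum>a<N. h (a + k))"
    unfolding h_def by (simp add: sum_distrib_left)
  also have "\<dots> = chi N (real k * real (fst m)) * (\<Sum>a<N. h a)"
    using sum_shift_periodic[of h N k] hp by simp
  also have "(\<Sum>a<N. h a) = SS N g m" unfolding h_def SS_def sum_ZN2 by simp
  finally show ?thesis .
qed

lemma shift_sum2:
  assumes N: "0 < N" and gper: "\<And>a b. g (a, b + N) = g (a, b)"
  shows "(\<Sum>x\<in>ZN2 N. ee N x m * complex_of_real (g (fst x, snd x + k))) = chi N (real k * real (snd m)) * SS N g m"
proof -
  have "(\<Sum>x\<in>ZN2 N. ee N x m * complex_of_real (g (fst x, snd x + k)))
      = (\<Sum>a<N. \<Sum>b<N. chi N (real k * real (snd m)) * (ee N (a, b + k) m * complex_of_real (g (a, b + k))))"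
    unfolding sum_ZN2 by (subst ee_shift2[where k=k]) (simp add: mult_ac)
  also have "\<dots> = chi N (real k * real (snd m)) * (\<Sum>a<N. \<Sum>b<N. ee N (a, b + k) m * complex_of_real (g (a, b + k)))"
    by (simp add: sum_distrib_left)
  also have "(\<Sum>a<N. \<Sum>b<N. ee N (a, b + k) m * complex_of_real (g (a, b + k)))
      = (\<Sum>a<N. \<Sum>b<N. ee N (a, b) m * complex_of_real (g (a, b)))"
    by (rule sum.cong[OF refl], rule sum_shift_periodic[of "\<lambda>b. ee N (_, b) m * complex_of_real (g (_, b))"])
      (simp add: ee_per2[OF N] gper)
  also have "\<dots> = SS N g m" unfolding SS_def sum_ZN2 by simp
  finally show ?thesis .
qed



lemma chi_Nm1: assumes N: "0 < N" shows "chi N (real (N - 1) * real j) = chi N (- real j)"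
proof -
  have "real (N - 1) * real j = - real j + real j * real N" using N by (simp add: of_nat_diff algebra_simps)
  note eq = this
  show ?thesis unfolding eq chi_add chi_natN[OF N] by simp
qed

lemma coef_bound1:
  assumes N: "0 < N" and gper: "\<And>a b. g (a + N, b) = g (a, b)"
    and D: "\<And>a b. \<bar>g (a + 1, b) - 2 * g (a, b) + g (a + (N - 1), b)\<bar> \<le> B"
  shows "(2 - 2 * cos (2 * pi * real (fst m) / N)) * cmod (SS N g m) \<le> (real N)^2 * B"
proof -
  let ?Z = "ZN2 N"
  define \<Delta> where "\<Delta> x = g (fst x + 1, snd x) - 2 * g x + g (fst x + (N - 1), snd x)" for x
  have "(\<Sum>x\<in>?Z. ee N x m * complex_of_real (\<Delta> x))
      = (\<Sum>x\<in>?Z. ee N x m * complex_of_real (g (fst x + 1, snd x)))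
        - 2 * (\<Sum>x\<in>?Z. ee N x m * complex_of_real (g x))
        + (\<Sum>x\<in>?Z. ee N x m * complex_of_real (g (fst x + (N - 1), snd x)))"
    unfolding \<Delta>_def by (simp add: algebra_simps sum.distrib sum_subtractf sum_distrib_left)
  also have "\<dots> = (chi N (real (fst m)) - 2 + chi N (- real (fst m))) * SS N g m"
  proof -
    have s1: "(\<Sum>x\<in>?Z. ee N x m * complex_of_real (g (fst x + 1, snd x))) = chi N (real (fst m)) * SS N g m"
      using shift_sum1[OF N gper, of m 1] by simp
    have s2: "(\<Sum>x\<in>?Z. ee N x m * complex_of_real (g (fst x + (N - 1), snd x))) = chi N (- real (fst m)) * SS N g m"
      using shift_sum1[OF N gper, of m "N - 1"] chi_Nm1[OF N, of "fst m"] by simp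
    show ?thesis unfolding s1 s2 by (simp add: SS_def algebra_simps)
  qed
  also have "chi N (real (fst m)) - 2 + chi N (- real (fst m)) = complex_of_real (2 * cos (2 * pi * real (fst m) / N) - 2)"
    using chi_plus_minus[of N "real (fst m)"] by simp
  finally have eq: "(\<Sum>x\<in>?Z. ee N x m * complex_of_real (\<Delta> x)) = complex_of_real (2 * cos (2 * pi * real (fst m) / N) - 2) * SS N g m" .
  have c: "cos (2 * pi * real (fst m) / N) \<le> 1" by simp
  have "(2 - 2 * cos (2 * pi * real (fst m) / N)) * cmod (SS N g m) = cmod (\<Sum>x\<in>?Z. ee N x m * complex_of_real (\<Delta> x))"
    unfolding eq norm_mult norm_of_real using c by simp
  also have "\<dots> \<le> (\<Sum>x\<in>?Z. cmod (ee N x m * complex_of_real (\<Delta> x)))" by (rule norm_sum)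
  also have "\<dots> = (\<Sum>x\<in>?Z. \<bar>\<Delta> x\<bar>)" by (simp add: norm_mult ee_def norm_chi)
  also have "\<dots> \<le> (\<Sum>x\<in>?Z. B)"
  proof (rule sum_mono)
    fix x :: "nat \<times> nat" obtain a b where "x = (a, b)" by force
    then show "\<bar>\<Delta> x\<bar> \<le> B" unfolding \<Delta>_def using D[of a b] by simp
  qed
  also have "\<dots> = (real N)^2 * B" by (simp add: card_ZN2 power2_eq_square)
  finally show ?thesis .
qed

lemma coef_bound2:
  assumes N: "0 < N" and gper: "\<And>a b. g (a, b + N) = g (a, b)"
    and D: "\<And>a b. \<bar>g (a, b + 1) - 2 * g (a, b) + g (a, b + (N - 1))\<bar> \<le> B"
  shows "(2 - 2 * cos (2 * pi * real (snd m) / N)) * cmod (SS N g m) \<le> (real N)^2 * B"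
proof -
  let ?Z = "ZN2 N"
  define \<Delta> where "\<Delta> x = g (fst x, snd x + 1) - 2 * g x + g (fst x, snd x + (N - 1))" for x
  have "(\<Sum>x\<in>?Z. ee N x m * complex_of_real (\<Delta> x))
      = (\<Sum>x\<in>?Z. ee N x m * complex_of_real (g (fst x, snd x + 1)))
        - 2 * (\<Sum>x\<in>?Z. ee N x m * complex_of_real (g x))
        + (\<Sum>x\<in>?Z. ee N x m * complex_of_real (g (fst x, snd x + (N - 1))))"
    unfolding \<Delta>_def by (simp add: algebra_simps sum.distrib sum_subtractf sum_distrib_left)
  also have "\<dots> = (chi N (real (snd m)) - 2 + chi N (- real (snd m))) * SS N g m"
  proof -
    have s1: "(\<Sum>x\<in>?Z. ee N x m * complex_of_real (g (fst x, snd x + 1))) = chi N (real (snd m)) * SS N g m"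
      using shift_sum2[OF N gper, of m 1] by simp
    have s2: "(\<Sum>x\<in>?Z. ee N x m * complex_of_real (g (fst x, snd x + (N - 1)))) = chi N (- real (snd m)) * SS N g m"
      using shift_sum2[OF N gper, of m "N - 1"] chi_Nm1[OF N, of "snd m"] by simp
    show ?thesis unfolding s1 s2 by (simp add: SS_def algebra_simps)
  qed
  also have "chi N (real (snd m)) - 2 + chi N (- real (snd m)) = complex_of_real (2 * cos (2 * pi * real (snd m) / N) - 2)"
    using chi_plus_minus[of N "real (snd m)"] by simp
  finally have eq: "(\<Sum>x\<in>?Z. ee N x m * complex_of_real (\<Delta> x)) = complex_of_real (2 * cos (2 * pi * real (snd m) / N) - 2) * SS N g m" .
  have c: "cos (2 * pi * real (snd m) / N) \<le> 1" by simp
  have "(2 - 2 * cos (2 * pi * real (snd m) / N)) * cmod (SS N g m) = cmod (\<Sum>x\<in>?Z. ee N x m * complex_of_real (\<Delta> x))"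
    unfolding eq norm_mult norm_of_real using c by simp
  also have "\<dots> \<le> (\<Sum>x\<in>?Z. cmod (ee N x m * complex_of_real (\<Delta> x)))" by (rule norm_sum)
  also have "\<dots> = (\<Sum>x\<in>?Z. \<bar>\<Delta> x\<bar>)" by (simp add: norm_mult ee_def norm_chi)
  also have "\<dots> \<le> (\<Sum>x\<in>?Z. B)"
  proof (rule sum_mono)
    fix x :: "nat \<times> nat" obtain a b where "x = (a, b)" by force
    then show "\<bar>\<Delta> x\<bar> \<le> B" unfolding \<Delta>_def using D[of a b] by simp
  qed
  also have "\<dots> = (real N)^2 * B" by (simp add: card_ZN2 power2_eq_square)
  finally show ?thesis .
qed



lemma sin_half:
  fixes x :: real
  assumes "0 \<le> x" "x \<le> 8/5"
  shows "x / 2 \<le> sin x"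
proof -
  have b: "\<bar>sin x - (\<Sum>m<3. sin_coeff m * x ^ m)\<bar> \<le> inverse (fact 3) * \<bar>x\<bar> ^ 3"
    by (rule Maclaurin_sin_bound)
  have s: "(\<Sum>m<3. sin_coeff m * x ^ m) = x"
    by (simp add: eval_nat_numeral sin_coeff_def)
  have "\<bar>sin x - x\<bar> \<le> x^3 / 6" using b assms(1) unfolding s by (simp add: eval_nat_numeral)
  then have "x - x^3 / 6 \<le> sin x" by linarith
  moreover have "x * x \<le> 3"
  proof -
    have "x * x \<le> (8/5) * (8/5)" using assms by (intro mult_mono) auto
    then show ?thesis by simp
  qed
  then have "x^3 / 6 \<le> x / 2"
    using assms(1) mult_left_mono[of "x*x" 3 x] by (simp add: power3_eq_cube mult_ac)
  ultimately show ?thesis by linarith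
qed

definition dd :: "nat \<Rightarrow> nat \<Rightarrow> nat" where "dd N a = min a (N - a)"

lemma cos_lower:
  assumes N: "0 < N" and a: "a < N"
  shows "9 * (real (dd N a))^2 / (real N)^2 \<le> 2 - 2 * cos (2 * pi * real a / N)"
proof -
  define y where "y = pi * real a / N"
  define z where "z = pi * real (dd N a) / N"
  have c: "2 - 2 * cos (2 * pi * real a / N) = 4 * (sin y)^2"
    using cos_double_sin[of y] unfolding y_def by (simp add: mult_ac)
  have sz: "sin z = sin y"
  proof (cases "a \<le> N - a")
    case True then show ?thesis unfolding z_def y_def dd_def by simp
  next
    case False
    then have "dd N a = N - a" unfolding dd_def by simp
    then have "z = pi - y" unfolding z_def y_def using a N by (simp add: of_nat_diff field_simps)
    then show ?thesis by simp
  qed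
  have "2 * dd N a \<le> N" unfolding dd_def by simp
  then have "2 * real (dd N a) \<le> real N" by linarith
  then have "real (dd N a) / N \<le> 1/2" using N by (simp add: divide_simps)
  then have "z \<le> pi * (1/2)" unfolding z_def using pi_gt_zero
    by (metis mult_left_mono less_imp_le times_divide_eq_right)
  moreover have "pi \<le> 16/5" using pi_approx(2) by simp
  ultimately have z8: "z \<le> 8/5" by simp
  have z0: "0 \<le> z" unfolding z_def by simp
  have "z / 2 \<le> sin z" by (rule sin_half[OF z0 z8])
  then have "(z/2)^2 \<le> (sin z)^2" using z0 by (intro power_mono) auto
  then have "z^2 \<le> 4 * (sin y)^2" using sz by (simp add: power_divide)
  moreover have "9 * (real (dd N a))^2 / (real N)^2 \<le> z^2"
  proof -
    have "3 * 3 \<le> pi * pi" using pi_gt3 by (intro mult_mono) auto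
    then have "9 \<le> pi^2" by (simp add: power2_eq_square)
    then have "9 * ((real (dd N a))^2 / (real N)^2) \<le> pi^2 * ((real (dd N a))^2 / (real N)^2)"
      by (intro mult_right_mono) auto
    then show ?thesis unfolding z_def by (simp add: power_divide power_mult_distrib)
  qed
  ultimately show ?thesis using c by linarith
qed



definition psi :: "nat \<Rightarrow> nat \<Rightarrow> real" where "psi u v = 1 / (real (max u v))^2"

lemma psi_nonneg: "0 \<le> psi u v" unfolding psi_def by simp

lemma harm_bound: "1 \<le> N \<Longrightarrow> (\<Sum>u\<le>N. 1 / real u) \<le> 1 + ln (real N)"
proof (induction N rule: dec_induct)
  case base then show ?case by simp
next
  case (step n)
  have n: "1 \<le> real n" using step by simp
  have "ln (real n / (1 + real n)) \<le> real n / (1 + real n) - 1" by (rule ln_le_minus_one) (use n in simp)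
  moreover have "ln (real n / (1 + real n)) = ln (real n) - ln (1 + real n)" using n by (simp add: ln_div)
  moreover have "real n / (1 + real n) - 1 = - (1 / (1 + real n))" using n by (simp add: field_simps)
  ultimately have *: "1 / (1 + real n) \<le> ln (1 + real n) - ln (real n)" by linarith
  have "(\<Sum>u\<le>Suc n. 1 / real u) = (\<Sum>u\<le>n. 1 / real u) + 1 / (1 + real n)" by simp
  then show ?case using step.IH * by simp
qed

lemma sum_reflect_le:
  fixes F :: "nat \<Rightarrow> real"
  assumes "\<And>u. 0 \<le> F u"
  shows "(\<Sum>a<N. F a) \<le> (\<Sum>u\<le>N. F u)" "(\<Sum>a<N. F (N - a)) \<le> (\<Sum>u\<le>N. F u)"
proof -
  show "(\<Sum>a<N. F a) \<le> (\<Sum>u\<le>N. F u)" by (rule sum_mono2) (auto simp: assms)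
  have inj: "inj_on (\<lambda>a. N - a) {..<N}" by (rule inj_onI) auto
  have "(\<Sum>a<N. F (N - a)) = (\<Sum>u\<in>(\<lambda>a. N - a) ` {..<N}. F u)"
    by (rule sum.reindex[OF inj, symmetric, unfolded comp_def])
  also have "\<dots> \<le> (\<Sum>u\<le>N. F u)" by (rule sum_mono2) (auto simp: assms)
  finally show "(\<Sum>a<N. F (N - a)) \<le> (\<Sum>u\<le>N. F u)" .
qed

lemma sum2_le:
  assumes h: "h = (\<lambda>a. a) \<or> h = (\<lambda>a. N - a)" and h': "h' = (\<lambda>a. a) \<or> h' = (\<lambda>a. N - a)"
  shows "(\<Sum>a<N. \<Sum>b<N. psi (h a) (h' b)) \<le> (\<Sum>u\<le>N. \<Sum>v\<le>N. psi u v)"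
proof -
  have 1: "(\<Sum>b<N. psi (h a) (h' b)) \<le> (\<Sum>v\<le>N. psi (h a) v)" for a
    using h' sum_reflect_le[of "psi (h a)" N] psi_nonneg by auto
  have "(\<Sum>a<N. \<Sum>b<N. psi (h a) (h' b)) \<le> (\<Sum>a<N. \<Sum>v\<le>N. psi (h a) v)"
    by (rule sum_mono) (rule 1)
  also have "\<dots> \<le> (\<Sum>u\<le>N. \<Sum>v\<le>N. psi u v)"
    using h sum_reflect_le[of "\<lambda>u. \<Sum>v\<le>N. psi u v" N] psi_nonneg by (auto intro: sum_nonneg)
  finally show ?thesis .
qed

lemma psi_dd: "psi (dd N a) (dd N b) \<le> psi a b + psi (N - a) b + psi a (N - b) + psi (N - a) (N - b)"
  using psi_nonneg[of a b] psi_nonneg[of "N - a" b] psi_nonneg[of a "N - b"] psi_nonneg[of "N - a" "N - b"]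
  unfolding dd_def min_def by (auto split: if_splits)

lemma T_bound:
  assumes "1 \<le> N"
  shows "(\<Sum>u\<le>N. \<Sum>v\<le>N. psi u v) \<le> 4 * (1 + ln (real N))"
proof -
  define A where "A u v = (if v \<le> u then 1 / (real u)^2 else 0)" for u v :: nat
  have pA: "psi u v \<le> A u v + A v u" for u v
    unfolding psi_def A_def max_def by auto
  have "(\<Sum>u\<le>N. \<Sum>v\<le>N. psi u v) \<le> (\<Sum>u\<le>N. \<Sum>v\<le>N. A u v + A v u)"
    by (intro sum_mono pA)
  also have "\<dots> = (\<Sum>u\<le>N. \<Sum>v\<le>N. A u v) + (\<Sum>u\<le>N. \<Sum>v\<le>N. A v u)"
    by (simp add: sum.distrib)
  also have "(\<Sum>u\<le>N. \<Sum>v\<le>N. A v u) = (\<Sum>u\<le>N. \<Sum>v\<le>N. A u v)" by (rule sum.swap)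
  also have "(\<Sum>u\<le>N. \<Sum>v\<le>N. A u v) \<le> (\<Sum>u\<le>N. 2 / real u)"
  proof (rule sum_mono)
    fix u assume u: "u \<in> {..N}"
    have "(\<Sum>v\<le>N. A u v) = (\<Sum>v\<in>{v\<in>{..N}. v \<le> u}. 1 / (real u)^2)"
      unfolding A_def by (rule sum.inter_filter[symmetric]) simp
    also have "{v\<in>{..N}. v \<le> u} = {..u}" using u by auto
    finally have "(\<Sum>v\<le>N. A u v) = (real u + 1) / (real u)^2" by simp
    also have "\<dots> \<le> 2 / real u"
    proof (cases "u = 0")
      case False
      then have "1 \<le> real u" by simp
      then show ?thesis by (simp add: field_simps power2_eq_square)
    qed simp
    finally show "(\<Sum>v\<le>N. A u v) \<le> 2 / real u" .
  qed
  also have "(\<Sum>u\<le>N. 2 / real u) = 2 * (\<Sum>u\<le>N. 1 / real u)" by (simp add: sum_distrib_left)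
  finally have "(\<Sum>u\<le>N. \<Sum>v\<le>N. psi u v) \<le> 4 * (\<Sum>u\<le>N. 1 / real u)" by simp
  also have "\<dots> \<le> 4 * (1 + ln (real N))" using harm_bound[OF assms] by simp
  finally show ?thesis .
qed

lemma psi_sum_bound:
  assumes N: "2 \<le> N"
  shows "(\<Sum>m\<in>ZN2 N. psi (dd N (fst m)) (dd N (snd m))) \<le> 40 * ln (real N)"
proof -
  let ?T = "\<Sum>u\<le>N. \<Sum>v\<le>N. psi u v"
  have "(\<Sum>m\<in>ZN2 N. psi (dd N (fst m)) (dd N (snd m))) = (\<Sum>a<N. \<Sum>b<N. psi (dd N a) (dd N b))"
    by (simp add: sum_ZN2)
  also have "\<dots> \<le> (\<Sum>a<N. \<Sum>b<N. psi a b + psi (N - a) b + psi a (N - b) + psi (N - a) (N - b))"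
    by (intro sum_mono psi_dd)
  also have "\<dots> = (\<Sum>a<N. \<Sum>b<N. psi a b) + (\<Sum>a<N. \<Sum>b<N. psi (N - a) b)
      + (\<Sum>a<N. \<Sum>b<N. psi a (N - b)) + (\<Sum>a<N. \<Sum>b<N. psi (N - a) (N - b))"
    by (simp add: sum.distrib)
  also have "\<dots> \<le> ?T + ?T + ?T + ?T"
    using sum2_le[of "\<lambda>a. a" N "\<lambda>a. a"] sum2_le[of "\<lambda>a. N - a" N "\<lambda>a. a"]
      sum2_le[of "\<lambda>a. a" N "\<lambda>a. N - a"] sum2_le[of "\<lambda>a. N - a" N "\<lambda>a. N - a"]
    by (intro add_mono) auto
  also have "\<dots> \<le> 16 * (1 + ln (real N))" using T_bound[of N] N by simp
  also have "\<dots> \<le> 40 * ln (real N)"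
  proof -
    have "ln 2 \<le> ln (real N)" using N by simp
    then have "2/3 \<le> ln (real N)" using ln2_ge_two_thirds by linarith
    then show ?thesis by (simp add: algebra_simps)
  qed
  finally show ?thesis .
qed



lemma unit_square_cbox: "unit_square = cbox (0,0) (1,1)"
  unfolding unit_square_def by (simp add: cbox_Pair_eq)

lemma content_unit: "Henstock_Kurzweil_Integration.content unit_square = 1"
  unfolding unit_square_cbox content_Pair by simp

lemma dd_zero: "a < N \<Longrightarrow> dd N a = 0 \<Longrightarrow> a = 0"
  unfolding dd_def by (auto simp: min_def split: if_splits)

lemma main_bound:
  fixes f :: "real \<times> real \<Rightarrow> real" and N :: nat and g :: "nat \<times> nat \<Rightarrow> real"
  assumes per1: "\<And>x y. f (x + 1, y) = f (x, y)"
    and per2: "\<And>x y. f (x, y + 1) = f (x, y)"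
    and C2f: "C2 f"
    and nz: "\<exists>p. f p \<noteq> 0"
    and N2: "N \<ge> 2"
    and gdef: "\<And>x1 x2. g (x1, x2) = f (real x1 / real N, real x2 / real N)"
    and big: "real N * (L2_norm f)\<^sup>2 \<ge> 8 * (C2_norm f)\<^sup>2"
  shows "FR N g \<le> 2 * \<bar>integral unit_square f\<bar> / L2_norm f
            + 16 * pi\<^sup>2 * (C2_norm f / L2_norm f) * ln (real N)
            + (8 * pi\<^sup>2 / L2_norm f) * (C2_norm f / real N)"
    and "0 < L2_norm f" and "\<bar>integral unit_square f\<bar> \<le> L2_norm f" and "0 \<le> C2_norm f"
proof -
  define C where "C = C2_norm f"
  define I where "I = integral unit_square f"
  define Q where "Q = L2_norm_sq f"
  define L2 where "L2 = L2_norm f"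
  have N0: "0 < N" using N2 by simp
  have Nr: "0 < real N" using N0 by simp
  have perf: "per2 f" unfolding per2_def using per1 per2 by blast
  have fC: "\<bar>f p\<bar> \<le> C" for p unfolding C_def by (rule C2_le_all(1)[OF C2f perf])
  have C0: "0 \<le> C" using fC[of 0] by simp
  have contf: "continuous_on UNIV f" using C2f unfolding C2_def by simp
  have gx: "g x = f (real (fst x) / N, real (snd x) / N)" for x
    using gdef[of "fst x" "snd x"] by simp
  have intf: "(f has_integral I) unit_square" unfolding I_def unit_square_cbox
    by (rule integrable_integral, rule integrable_continuous, rule continuous_on_subset[OF contf]) auto
  have contf2: "continuous_on UNIV (\<lambda>p. (f p)^2)" by (intro continuous_intros contf)
  have intf2: "((\<lambda>p. (f p)^2) has_integral Q) unit_square" unfolding Q_def L2_norm_sq_def unit_square_cbox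
    by (rule integrable_integral, rule integrable_continuous, rule continuous_on_subset[OF contf2]) auto
  have Q0: "0 \<le> Q" using has_integral_nonneg[OF intf2] by simp
  have L2Q: "L2^2 = Q" unfolding L2_def L2_norm_def Q_def using Q0 unfolding Q_def by simp
  have L20: "0 \<le> L2" unfolding L2_def L2_norm_def using Q0 unfolding Q_def by simp
  have IQ: "I^2 \<le> Q"
  proof -
    have "((\<lambda>p. (f p)^2 - 2 * I * f p + I^2) has_integral (Q - 2 * I * I + I^2 * 1)) unit_square"
    proof -
      have c: "((\<lambda>p. I^2) has_integral (I^2 * 1)) unit_square"
        using has_integral_const[of "I^2" "(0::real,0::real)" "(1,1)"] content_unit
        unfolding unit_square_cbox by simp
      show ?thesis
        using has_integral_add[OF has_integral_diff[OF intf2 has_integral_cmul[OF intf, of "2 * I"]] c]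
        by (simp add: mult_ac)
    qed
    moreover have "(f p)^2 - 2 * I * f p + I^2 = (f p - I)^2" for p by (simp add: power2_eq_square algebra_simps)
    ultimately have "((\<lambda>p. (f p - I)^2) has_integral (Q - 2 * I * I + I^2 * 1)) unit_square" by simp
    then have "0 \<le> Q - 2 * I * I + I^2 * 1" by (rule has_integral_nonneg) simp
    then show ?thesis by (simp add: power2_eq_square)
  qed
  have IL2: "\<bar>I\<bar> \<le> L2"
  proof -
    have "sqrt (I^2) \<le> sqrt Q" using IQ by (rule real_sqrt_le_mono)
    then show ?thesis unfolding L2_def L2_norm_def Q_def by simp
  qed
  have L2pos: "0 < L2"
  proof (rule ccontr)
    assume "\<not> 0 < L2"
    then have "L2 = 0" using L20 by simp
    then have "C^2 \<le> 0" using big unfolding C_def L2_def by simp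
    then have "C = 0" using C0 by (simp add: power2_eq_square mult_le_0_iff)
    then have "f p = 0" for p using fC[of p] by simp
    then show False using nz by simp
  qed
  have lipf: "\<bar>f (a,b) - f (c,d)\<bar> \<le> C * (\<bar>a - c\<bar> + \<bar>b - d\<bar>)" for a b c d
    unfolding C_def by (rule f_lip[OF C2f perf])
  have lipf2: "\<bar>(f (a,b))^2 - (f (c,d))^2\<bar> \<le> (2 * C * C) * (\<bar>a - c\<bar> + \<bar>b - d\<bar>)" for a b c d
  proof -
    have "\<bar>(f (a,b))^2 - (f (c,d))^2\<bar> = \<bar>f (a,b) + f (c,d)\<bar> * \<bar>f (a,b) - f (c,d)\<bar>"
      by (simp add: power2_eq_square abs_mult[symmetric] algebra_simps)
    also have "\<dots> \<le> (2 * C) * (C * (\<bar>a - c\<bar> + \<bar>b - d\<bar>))"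
      using fC[of "(a,b)"] fC[of "(c,d)"] lipf[of a b c d] C0
      by (intro mult_mono) (auto simp: abs_triangle_ineq[THEN order_trans])
    finally show ?thesis by (simp add: mult_ac)
  qed
  have R1: "\<bar>(\<Sum>x\<in>ZN2 N. g x) - (real N)^2 * I\<bar> \<le> 2 * C * N"
    using riemann[OF N0 contf lipf] unfolding I_def gx[symmetric] by simp
  have R2: "\<bar>(\<Sum>x\<in>ZN2 N. (g x)^2) - (real N)^2 * Q\<bar> \<le> 2 * (2 * C * C) * N"
    using riemann[OF N0 contf2 lipf2] unfolding Q_def L2_norm_sq_def gx[symmetric] by simp
  have bigQ: "8 * C^2 \<le> real N * Q" using big unfolding C_def L2Q[symmetric] L2_def by simp
  have P: "(real N)^2 * Q / 2 \<le> (\<Sum>m\<in>ZN2 N. (cmod (fourier N g m))^2)"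
  proof -
    have "4 * C * C * N \<le> (real N)^2 * Q / 2"
      using mult_left_mono[OF bigQ, of "real N"] Nr by (simp add: power2_eq_square algebra_simps)
    then show ?thesis unfolding parseval[OF N0] using R2 by linarith
  qed
  have den: "real N * L2 / 2 \<le> sqrt (\<Sum>m\<in>ZN2 N. (cmod (fourier N g m))^2)"
  proof -
    have "(real N * L2 / 2)^2 \<le> (real N)^2 * Q / 2"
      using Q0 L2Q by (simp add: power_mult_distrib power_divide)
    then have "(real N * L2 / 2)^2 \<le> (\<Sum>m\<in>ZN2 N. (cmod (fourier N g m))^2)" using P by linarith
    then show ?thesis using real_le_rsqrt by blast
  qed
  have gper1: "g (a + N, b) = g (a, b)" for a b
  proof -
    have "real (a + N) / N = real a / N + 1" using Nr by (simp add: field_simps)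
    then show ?thesis unfolding gdef using per1 by simp
  qed
  have gper2: "g (a, b + N) = g (a, b)" for a b
  proof -
    have "real (b + N) / N = real b / N + 1" using Nr by (simp add: field_simps)
    then show ?thesis unfolding gdef using per2 by simp
  qed
  have h0: "0 \<le> 1 / real N" by simp
  have D1: "\<bar>g (a + 1, b) - 2 * g (a, b) + g (a + (N - 1), b)\<bar> \<le> 2 * (1 / real N)^2 * C" for a b
  proof -
    have e1: "real (a + 1) / N = real a / N + 1 / N" by (simp add: add_divide_distrib)
    have "real (a + (N - 1)) / N = (real a / N - 1 / N) + 1" using N0 Nr by (simp add: of_nat_diff field_simps)
    then have e2: "g (a + (N - 1), b) = f (real a / N - 1 / N, real b / N)" unfolding gdef using per1 by simp
    show ?thesis unfolding e2 unfolding gdef e1 C_def by (rule f_sd1[OF C2f perf h0])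
  qed
  have D2: "\<bar>g (a, b + 1) - 2 * g (a, b) + g (a, b + (N - 1))\<bar> \<le> 2 * (1 / real N)^2 * C" for a b
  proof -
    have e1: "real (b + 1) / N = real b / N + 1 / N" by (simp add: add_divide_distrib)
    have "real (b + (N - 1)) / N = (real b / N - 1 / N) + 1" using N0 Nr by (simp add: of_nat_diff field_simps)
    then have e2: "g (a, b + (N - 1)) = f (real a / N, real b / N - 1 / N)" unfolding gdef using per2 by simp
    show ?thesis unfolding e2 unfolding gdef e1 C_def by (rule f_sd2[OF C2f perf h0])
  qed
  have NB: "(real N)^2 * (2 * (1 / real N)^2 * C) = 2 * C" using Nr by (simp add: field_simps)
  have fourierSS: "cmod (fourier N g m) = cmod (SS N g m) / N" for m
    unfolding fourier_ee SS_def[symmetric] by (simp add: norm_mult norm_divide)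
  have coef: "cmod (fourier N g m) * (real (max (dd N (fst m)) (dd N (snd m))))^2 \<le> 2 * C * N / 9"
    if m: "m \<in> ZN2 N" for m
  proof -
    have key: "(real (dd N a))^2 * cmod (SS N g m) \<le> 2 * C * (real N)^2 / 9"
      if a: "a < N" and cb: "(2 - 2 * cos (2 * pi * real a / N)) * cmod (SS N g m) \<le> 2 * C" for a
    proof -
      have "9 * (real (dd N a))^2 / (real N)^2 * cmod (SS N g m) \<le> 2 * C"
        using cos_lower[OF N0 a] cb by (meson mult_right_mono norm_ge_zero order_trans)
      then show ?thesis using Nr by (simp add: field_simps)
    qed
    have k1: "(real (dd N (fst m)))^2 * cmod (SS N g m) \<le> 2 * C * (real N)^2 / 9"
      using m coef_bound1[OF N0 gper1 D1, of m] NB unfolding ZN2_def by (intro key) auto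
    have k2: "(real (dd N (snd m)))^2 * cmod (SS N g m) \<le> 2 * C * (real N)^2 / 9"
      using m coef_bound2[OF N0 gper2 D2, of m] NB unfolding ZN2_def by (intro key) auto
    have "(real (max (dd N (fst m)) (dd N (snd m))))^2 * cmod (SS N g m) \<le> 2 * C * (real N)^2 / 9"
      using k1 k2 by (simp add: max_def)
    then show ?thesis unfolding fourierSS using Nr by (simp add: field_simps power2_eq_square)
  qed
  have coef2: "cmod (fourier N g m) \<le> (if m = (0,0) then cmod (fourier N g (0,0)) else 0)
      + 2 * C * N / 9 * psi (dd N (fst m)) (dd N (snd m))" if m: "m \<in> ZN2 N" for m
  proof (cases "m = (0,0)")
    case True then show ?thesis using psi_nonneg[of "dd N (fst m)" "dd N (snd m)"] C0 by simp
  next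
    case False
    have "fst m \<noteq> 0 \<or> snd m \<noteq> 0" using False by (auto simp: prod_eq_iff)
    then have "dd N (fst m) \<noteq> 0 \<or> dd N (snd m) \<noteq> 0"
    proof -
      have "fst m < N" "snd m < N" using m unfolding ZN2_def by auto
      then show ?thesis using dd_zero[of "fst m" N] dd_zero[of "snd m" N] \<open>fst m \<noteq> 0 \<or> snd m \<noteq> 0\<close> by blast
    qed
    then have "max (dd N (fst m)) (dd N (snd m)) \<noteq> 0" by linarith
    then have mp: "0 < (real (max (dd N (fst m)) (dd N (snd m))))^2" by simp
    have "cmod (fourier N g m) = cmod (fourier N g m) * (real (max (dd N (fst m)) (dd N (snd m))))^2
        * psi (dd N (fst m)) (dd N (snd m))"
      unfolding psi_def using mp by simp
    also have "\<dots> \<le> 2 * C * N / 9 * psi (dd N (fst m)) (dd N (snd m))"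
      using coef[OF m] psi_nonneg by (rule mult_right_mono)
    finally show ?thesis using False by simp
  qed
  have f00: "cmod (fourier N g (0,0)) \<le> real N * \<bar>I\<bar> + 2 * C"
  proof -
    have "fourier N g (0,0) = (1 / of_nat N) * complex_of_real (\<Sum>x\<in>ZN2 N. g x)"
      unfolding fourier_def by (simp add: chi_zero)
    then have e: "cmod (fourier N g (0,0)) = \<bar>\<Sum>x\<in>ZN2 N. g x\<bar> / N"
      by (simp only: norm_mult norm_of_real norm_divide) simp
    have b: "\<bar>\<Sum>x\<in>ZN2 N. g x\<bar> \<le> (real N)^2 * \<bar>I\<bar> + 2 * C * N"
    proof -
      have "\<bar>(real N)^2 * I\<bar> = (real N)^2 * \<bar>I\<bar>" by (simp add: abs_mult)
      then show ?thesis using R1 by linarith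
    qed
    have "\<bar>\<Sum>x\<in>ZN2 N. g x\<bar> / N \<le> ((real N)^2 * \<bar>I\<bar> + 2 * C * N) / N"
      by (rule divide_right_mono[OF b]) simp
    also have "((real N)^2 * \<bar>I\<bar> + 2 * C * N) / N = real N * \<bar>I\<bar> + 2 * C"
      using Nr by (simp add: field_simps power2_eq_square)
    finally show ?thesis using e by simp
  qed
  have num: "(\<Sum>m\<in>ZN2 N. cmod (fourier N g m)) \<le> real N * \<bar>I\<bar> + 2 * C + 2 * C * N / 9 * (40 * ln (real N))"
  proof -
    have "(\<Sum>m\<in>ZN2 N. cmod (fourier N g m)) \<le> (\<Sum>m\<in>ZN2 N. (if m = (0,0) then cmod (fourier N g (0,0)) else 0)
      + 2 * C * N / 9 * psi (dd N (fst m)) (dd N (snd m)))"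
      by (rule sum_mono) (rule coef2)
    also have "\<dots> = cmod (fourier N g (0,0)) + 2 * C * N / 9 * (\<Sum>m\<in>ZN2 N. psi (dd N (fst m)) (dd N (snd m)))"
      using N0 unfolding ZN2_def by (simp add: sum.distrib sum_distrib_left)
    also have "\<dots> \<le> real N * \<bar>I\<bar> + 2 * C + 2 * C * N / 9 * (40 * ln (real N))"
      using f00 psi_sum_bound[OF N2] C0 Nr by (intro add_mono mult_left_mono) auto
    finally show ?thesis .
  qed
  let ?A = "\<Sum>m\<in>ZN2 N. cmod (fourier N g m)"
  let ?B = "sqrt (\<Sum>m\<in>ZN2 N. (cmod (fourier N g m))^2)"
  have A0: "0 \<le> ?A" by (simp add: sum_nonneg)
  have NL: "0 < real N * L2 / 2" using Nr L2pos by simp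
  have "FR N g = ?A / ?B" unfolding FR_def by simp
  also have "\<dots> \<le> ?A / (real N * L2 / 2)"
  proof -
    have Bp: "0 < ?B" using den NL by linarith
    show ?thesis using den NL A0 Bp by (intro divide_left_mono) auto
  qed
  also have "\<dots> \<le> (real N * \<bar>I\<bar> + 2 * C + 2 * C * N / 9 * (40 * ln (real N))) / (real N * L2 / 2)"
    using num NL by (intro divide_right_mono) auto
  also have "\<dots> = 2 * \<bar>I\<bar> / L2 + (160 / 9) * (C / L2) * ln (real N) + 4 * (C / L2) / N"
    using Nr L2pos by (simp add: field_simps)
  also have "\<dots> \<le> 2 * \<bar>I\<bar> / L2 + 16 * pi\<^sup>2 * (C / L2) * ln (real N) + (8 * pi\<^sup>2 / L2) * (C / real N)"
  proof -
    have pi2: "9 \<le> pi^2"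
    proof -
      have "3 * 3 \<le> pi * pi" using pi_gt3 by (intro mult_mono) auto
      then show ?thesis by (simp add: power2_eq_square)
    qed
    have CL: "0 \<le> C / L2" using C0 L2pos by simp
    have lnN: "0 \<le> ln (real N)" using N2 by simp
    have "(160 / 9) * (C / L2) * ln (real N) \<le> 16 * pi\<^sup>2 * (C / L2) * ln (real N)"
      using pi2 CL lnN by (intro mult_right_mono) auto
    moreover have "4 * (C / L2) / N \<le> (8 * pi\<^sup>2 / L2) * (C / real N)"
    proof -
      have "4 * (C / L2) / N = 4 * ((C / L2) / N)" by simp
      also have "\<dots> \<le> (8 * pi^2) * ((C / L2) / N)"
      proof (rule mult_right_mono)
        show "0 \<le> (C / L2) / N" using CL Nr by (rule divide_nonneg_pos)
      qed (use pi2 in auto)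
      also have "\<dots> = (8 * pi\<^sup>2 / L2) * (C / real N)" by simp
      finally show ?thesis .
    qed
    ultimately show ?thesis by linarith
  qed
  finally show "FR N g \<le> 2 * \<bar>integral unit_square f\<bar> / L2_norm f
            + 16 * pi\<^sup>2 * (C2_norm f / L2_norm f) * ln (real N)
            + (8 * pi\<^sup>2 / L2_norm f) * (C2_norm f / real N)" unfolding C_def I_def L2_def .
  show "0 < L2_norm f" using L2pos unfolding L2_def .
  show "\<bar>integral unit_square f\<bar> \<le> L2_norm f" using IL2 unfolding I_def L2_def .
  show "0 \<le> C2_norm f" using C0 unfolding C_def .
qed



theorem proposition1p6:
  fixes f :: "real \<times> real \<Rightarrow> real" and N :: nat and g :: "nat \<times> nat \<Rightarrow> real"
  assumes per1: "\<And>x y. f (x + 1, y) = f (x, y)"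
    and per2: "\<And>x y. f (x, y + 1) = f (x, y)"
    and C2f: "C2 f"
    and nz: "\<exists>p. f p \<noteq> 0"
    and N2: "N \<ge> 2"
    and gdef: "\<And>x1 x2. g (x1, x2) = f (real x1 / real N, real x2 / real N)"
    and big: "real N * (L2_norm f)\<^sup>2 \<ge> 8 * (C2_norm f)\<^sup>2"
  shows "(FR N g \<le> 2 * \<bar>integral unit_square f\<bar> / L2_norm f
            + 16 * pi\<^sup>2 * (C2_norm f / L2_norm f) * ln (real N)
            + (8 * pi\<^sup>2 / L2_norm f) * (C2_norm f / real N)) \<and>
         ((\<forall>p. f p \<ge> 0) \<longrightarrow> integral unit_square f > 0 \<longrightarrow>
         FR N g \<le> 2 + 16 * pi\<^sup>2 * (C2_norm f / integral unit_square f) * ln (real N)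
            + (8 * pi\<^sup>2 / integral unit_square f) * (C2_norm f / real N))"
proof -
  note mb = main_bound[OF per1 per2 C2f nz N2 gdef big]
  define I where "I = integral unit_square f"
  define L where "L = L2_norm f"
  define C where "C = C2_norm f"
  have L0: "0 < L" and IL: "\<bar>I\<bar> \<le> L" and C0: "0 \<le> C" using mb(2-4) unfolding I_def L_def C_def by auto
  have part1: "FR N g \<le> 2 * \<bar>I\<bar> / L + 16 * pi\<^sup>2 * (C / L) * ln (real N) + (8 * pi\<^sup>2 / L) * (C / real N)"
    using mb(1) unfolding I_def L_def C_def .
  have part2: "FR N g \<le> 2 + 16 * pi\<^sup>2 * (C / I) * ln (real N) + (8 * pi\<^sup>2 / I) * (C / real N)"
    if I0: "0 < I"
  proof -
    have IL': "I \<le> L" using IL I0 by simp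
    have lnN: "0 \<le> ln (real N)" using N2 by simp
    have a: "2 * \<bar>I\<bar> / L \<le> 2" using IL' I0 L0 by (simp add: divide_simps)
    have CLI: "C / L \<le> C / I" using C0 I0 IL' by (intro divide_left_mono) auto
    have b: "16 * pi\<^sup>2 * (C / L) * ln (real N) \<le> 16 * pi\<^sup>2 * (C / I) * ln (real N)"
      using CLI lnN by (intro mult_right_mono mult_left_mono) auto
    have LI: "8 * pi\<^sup>2 / L \<le> 8 * pi\<^sup>2 / I" using I0 IL' by (intro divide_left_mono) auto
    have c: "(8 * pi\<^sup>2 / L) * (C / real N) \<le> (8 * pi\<^sup>2 / I) * (C / real N)"
      using LI C0 by (intro mult_right_mono) auto
    show ?thesis using part1 a b c by linarith
  qed
  show ?thesis using part1 part2 unfolding I_def L_def C_def by blast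
qed

end
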